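(* Let $L$ be a lattice and $\mathbf x,\mathbf y\in L^n$. If $\mathbf x$ and $\mathbf y$ are comonotone, or if they are comparable (i.e. $\mathbf x\le\mathbf y$ or $\mathbf y\le\mathbf x$ componentwise), then $\mathbf x$ and $\mathbf y$ are both g-comonotone and dually g-comonotone.
   Context: $\mathbf x,\mathbf y\in L^n$ are comonotone if for all $i,j\in\{1,\dots,n\}$: ($x_i\le x_j$ and $y_i\le y_j$) or ($x_i\ge x_j$ and $y_i\ge y_j$). They are g-comonotone if for every pair $i,j$: $(x_i\vee y_i)\wedge(x_j\vee y_j)=(x_i\wedge x_j)\vee(y_i\wedge y_j)$; dually g-comonotone if for every pair $i,j$: $(x_i\wedge y_i)\vee(x_j\wedge y_j)=(x_i\vee x_j)\wedge(y_i\vee y_j)$. *)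

theory Defs
  imports Main
begin

text \<open>Vectors in L^n are represented as functions nat => L, with only the
components i < n relevant.\<close>

definition comonotone :: "nat \<Rightarrow> (nat \<Rightarrow> 'a::lattice) \<Rightarrow> (nat \<Rightarrow> 'a) \<Rightarrow> bool" where
  "comonotone n x y \<longleftrightarrow> (\<forall>i<n. \<forall>j<n.
     (x i \<le> x j \<and> y i \<le> y j) \<or> (x i \<ge> x j \<and> y i \<ge> y j))"

definition g_comonotone :: "nat \<Rightarrow> (nat \<Rightarrow> 'a::lattice) \<Rightarrow> (nat \<Rightarrow> 'a) \<Rightarrow> bool" where
  "g_comonotone n x y \<longleftrightarrow> (\<forall>i<n. \<forall>j<n.
     inf (sup (x i) (y i)) (sup (x j) (y j)) = sup (inf (x i) (x j)) (inf (y i) (y j)))"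

definition dually_g_comonotone :: "nat \<Rightarrow> (nat \<Rightarrow> 'a::lattice) \<Rightarrow> (nat \<Rightarrow> 'a) \<Rightarrow> bool" where
  "dually_g_comonotone n x y \<longleftrightarrow> (\<forall>i<n. \<forall>j<n.
     sup (inf (x i) (y i)) (inf (x j) (y j)) = inf (sup (x i) (x j)) (sup (y i) (y j)))"

definition vec_le :: "nat \<Rightarrow> (nat \<Rightarrow> 'a::order) \<Rightarrow> (nat \<Rightarrow> 'a) \<Rightarrow> bool" where
  "vec_le n x y \<longleftrightarrow> (\<forall>i<n. x i \<le> y i)"

end

theory Submission
  imports Defs
begin

lemma co1:
  fixes a b c d :: "'a::lattice"
  assumes "a \<le> c" "b \<le> d"
  shows "inf (sup a b) (sup c d) = sup (inf a c) (inf b d)"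
    and "inf (sup c d) (sup a b) = sup (inf c a) (inf d b)"
    and "sup (inf a b) (inf c d) = inf (sup a c) (sup b d)"
    and "sup (inf c d) (inf a b) = inf (sup c a) (sup d b)"
proof -
  have s: "sup a b \<le> sup c d" using assms by (meson le_supI sup.coboundedI1 sup.coboundedI2)
  have i: "inf a b \<le> inf c d" using assms by (meson le_infI inf.coboundedI1 inf.coboundedI2)
  show "inf (sup a b) (sup c d) = sup (inf a c) (inf b d)"
    using s assms by (simp add: inf.absorb1 inf.absorb2)
  show "inf (sup c d) (sup a b) = sup (inf c a) (inf d b)"
    using s assms by (simp add: inf.absorb1 inf.absorb2)
  show "sup (inf a b) (inf c d) = inf (sup a c) (sup b d)"
    using i assms by (simp add: sup.absorb1 sup.absorb2)
  show "sup (inf c d) (inf a b) = inf (sup c a) (sup d b)"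
    using i assms by (simp add: sup.absorb1 sup.absorb2)
qed

lemma cmp1:
  fixes a b c d :: "'a::lattice"
  assumes "a \<le> b" "c \<le> d"
  shows "inf (sup a b) (sup c d) = sup (inf a c) (inf b d)"
    and "sup (inf a b) (inf c d) = inf (sup a c) (sup b d)"
    and "inf (sup b a) (sup d c) = sup (inf b d) (inf a c)"
    and "sup (inf b a) (inf d c) = inf (sup b d) (sup a c)"
proof -
  have i: "inf a c \<le> inf b d" using assms by (meson le_infI inf.coboundedI1 inf.coboundedI2)
  have s: "sup a c \<le> sup b d" using assms by (meson le_supI sup.coboundedI1 sup.coboundedI2)
  show "inf (sup a b) (sup c d) = sup (inf a c) (inf b d)"
    using i assms by (simp add: sup.absorb1 sup.absorb2)
  show "sup (inf a b) (inf c d) = inf (sup a c) (sup b d)"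
    using s assms by (simp add: inf.absorb1 inf.absorb2)
  show "inf (sup b a) (sup d c) = sup (inf b d) (inf a c)"
    using i assms by (simp add: sup.absorb1 sup.absorb2)
  show "sup (inf b a) (inf d c) = inf (sup b d) (sup a c)"
    using s assms by (simp add: inf.absorb1 inf.absorb2)
qed

theorem lemma1:
  fixes n :: nat and x y :: "nat \<Rightarrow> 'a::lattice"
  assumes "comonotone n x y \<or> vec_le n x y \<or> vec_le n y x"
  shows "g_comonotone n x y \<and> dually_g_comonotone n x y"
  using assms
  unfolding comonotone_def vec_le_def g_comonotone_def dually_g_comonotone_def
  by (metis co1 cmp1)

end
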